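(* $\mathcal{S}pl$ is not a $\Pi^{0}_{4}$ subset of $2^{2^{<\omega}}$ (identified with the Cantor space via characteristic functions).
   Context: For an infinite $A\subseteq\omega$, let $S(A)$ be the set of all $\sigma\in2^{<\omega}$ such that $\sigma$ is constant on $A\cap\mathrm{dom}(\sigma)$. The splitting ideal $\mathcal{S}pl$ is the ideal on $2^{<\omega}$ generated by the sets $S(A)$, $A\in[\omega]^{\omega}$. *)

theory Defs
  imports "HOL-Analysis.Analysis"
begin

text \<open>Finite binary sequences 2^{<omega} are represented as bool lists;
  dom(sigma) = {0..<length sigma}.\<close>

definition S :: "nat set \<Rightarrow> bool list set" where
  "S A = {\<sigma>. \<forall>i\<in>A. \<forall>j\<in>A. i < length \<sigma> \<longrightarrow> j < length \<sigma> \<longrightarrow> \<sigma> ! i = \<sigma> ! j}"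

text \<open>The splitting ideal: the ideal on 2^{<omega} generated by the sets S(A), A infinite,
  i.e. all subsets of finite unions of generators.\<close>

definition Spl :: "bool list set set" where
  "Spl = {X. \<exists>\<A>. finite \<A> \<and> (\<forall>A\<in>\<A>. infinite A) \<and> X \<subseteq> (\<Union>A\<in>\<A>. S A)}"

definition cantor_top :: "('a \<Rightarrow> bool) topology" where
  "cantor_top = product_topology (\<lambda>_. discrete_topology (UNIV :: bool set)) UNIV"

text \<open>Boldface Borel hierarchy, indexed from 1: Sigma^0_1 = open,
  Pi^0_n = complements of Sigma^0_n, Sigma^0_{n+1} = countable unions of Pi^0_n sets.\<close>

fun Sigma0 :: "nat \<Rightarrow> ('a \<Rightarrow> bool) set set" where
  "Sigma0 0 = {}"
| "Sigma0 (Suc 0) = {U. openin cantor_top U}"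
| "Sigma0 (Suc (Suc n)) =
     {\<Union>(range f) | f :: nat \<Rightarrow> ('a \<Rightarrow> bool) set. \<forall>i. f i \<in> uminus ` Sigma0 (Suc n)}"

definition Pi0 :: "nat \<Rightarrow> ('a \<Rightarrow> bool) set set" where
  "Pi0 n = uminus ` Sigma0 n"

definition char_fun :: "'a set \<Rightarrow> ('a \<Rightarrow> bool)" where
  "char_fun X = (\<lambda>x. x \<in> X)"

end

theory Submission
  imports Defs
begin

definition Wg :: "(nat \<Rightarrow> nat \<Rightarrow> bool) \<Rightarrow> nat \<Rightarrow> nat \<Rightarrow> bool" where
  "Wg \<psi> m t = (\<forall>k\<le>m. \<exists>n\<le>t. \<psi> k n)"

definition Dg :: "(nat \<Rightarrow> nat \<Rightarrow> bool) \<Rightarrow> nat \<Rightarrow> bool" where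
  "Dg \<psi> s = (case prod_decode s of (m,t) \<Rightarrow> Wg \<psi> m t \<and> (\<forall>t'<t. \<not> Wg \<psi> m t'))"

lemma Wg_mono: "Wg \<psi> m t \<Longrightarrow> t \<le> t' \<Longrightarrow> Wg \<psi> m t'"
  unfolding Wg_def by (meson order_trans)

lemma Wg_ex: assumes "\<forall>k. \<exists>n. \<psi> k n" shows "\<exists>t. Wg \<psi> m t"
proof (induction m)
  case 0
  obtain n where "\<psi> 0 n" using assms by blast
  then show ?case unfolding Wg_def by (intro exI[of _ n]) auto
next
  case (Suc m)
  then obtain t where t: "Wg \<psi> m t" by blast
  obtain n where n: "\<psi> (Suc m) n" using assms by blast
  have "Wg \<psi> (Suc m) (max t n)"
    unfolding Wg_def
  proof (intro allI impI)
    fix k assume "k \<le> Suc m"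
    then consider "k \<le> m" | "k = Suc m" by linarith
    then show "\<exists>n'\<le>max t n. \<psi> k n'"
    proof cases
      case 1 then show ?thesis using t unfolding Wg_def by (meson max.coboundedI1 order_trans)
    next
      case 2 then show ?thesis using n by (intro exI[of _ n]) auto
    qed
  qed
  then show ?case by blast
qed

lemma claim2: "infinite {s. Dg \<psi> s} \<longleftrightarrow> (\<forall>k. \<exists>n. \<psi> k n)"
proof
  assume inf: "infinite {s. Dg \<psi> s}"
  show "\<forall>k. \<exists>n. \<psi> k n"
  proof (rule ccontr)
    assume "\<not> (\<forall>k. \<exists>n. \<psi> k n)"
    then obtain k where k: "\<forall>n. \<not> \<psi> k n" by blast
    have "{s. Dg \<psi> s} \<subseteq> (\<lambda>m. prod_encode (m, LEAST t. Wg \<psi> m t)) ` {..<k}"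
    proof
      fix s assume "s \<in> {s. Dg \<psi> s}"
      then obtain m t where mt: "prod_decode s = (m,t)" "Wg \<psi> m t" "\<forall>t'<t. \<not> Wg \<psi> m t'"
        unfolding Dg_def by (auto split: prod.splits)
      have "m < k"
      proof (rule ccontr)
        assume "\<not> m < k" then have "k \<le> m" by simp
        then show False using mt(2) k unfolding Wg_def by blast
      qed
      moreover have "t = (LEAST t. Wg \<psi> m t)"
        by (rule Least_equality[symmetric]) (use mt in \<open>auto intro: leI\<close>)
      moreover have "s = prod_encode (m,t)" using mt(1) by (metis prod_decode_inverse)
      ultimately show "s \<in> (\<lambda>m. prod_encode (m, LEAST t. Wg \<psi> m t)) ` {..<k}" by auto
    qed
    then have "finite {s. Dg \<psi> s}" using finite_subset by blast
    then show False using inf by blast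
  qed
next
  assume all: "\<forall>k. \<exists>n. \<psi> k n"
  define f where "f m = prod_encode (m, LEAST t. Wg \<psi> m t)" for m
  have "inj f" unfolding f_def inj_def by (simp add: prod_encode_eq)
  then have "infinite (range f)" by (rule range_inj_infinite)
  moreover have "range f \<subseteq> {s. Dg \<psi> s}"
  proof
    fix s assume "s \<in> range f"
    then obtain m where s: "s = f m" by blast
    obtain t0 where "Wg \<psi> m t0" using Wg_ex[OF all] by blast
    then have "Wg \<psi> m (LEAST t. Wg \<psi> m t)" by (rule LeastI)
    moreover have "\<forall>t'<(LEAST t. Wg \<psi> m t). \<not> Wg \<psi> m t'" using not_less_Least by blast
    ultimately have "Dg \<psi> (f m)" unfolding f_def Dg_def prod_encode_inverse prod.case by blast
    then show "s \<in> {s. Dg \<psi> s}" unfolding s by blast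
  qed
  ultimately show "infinite {s. Dg \<psi> s}" using finite_subset by blast
qed

definition aa :: "nat \<Rightarrow> nat \<Rightarrow> nat" where "aa i j = Suc (prod_encode (i,j))"

definition sig :: "nat \<Rightarrow> nat \<Rightarrow> nat \<Rightarrow> bool list" where
  "sig i j s = map (\<lambda>p. aa i j \<le> p \<and> fst (prod_decode p) \<noteq> i) [0..<aa i j + s + 1]"

definition GG :: "(nat \<Rightarrow> nat \<Rightarrow> nat \<Rightarrow> bool) \<Rightarrow> bool list set" where
  "GG D = {sig i j s | i j s. D i j s}"

lemma length_sig[simp]: "length (sig i j s) = aa i j + s + 1"
  unfolding sig_def by simp

lemma nth_sig: assumes "p < length (sig i j s)" shows "sig i j s ! p = (aa i j \<le> p \<and> fst (prod_decode p) \<noteq> i)"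
proof -
  have "p < aa i j + s + 1 - 0" using assms by simp
  then show ?thesis unfolding sig_def by (simp only: nth_map_upt add_0)
qed

lemma aa_ge: "i < aa i j" "j < aa i j"
  unfolding aa_def using le_prod_encode_1 le_prod_encode_2 by (auto simp: less_Suc_eq_le)

lemma claim1a:
  assumes H: "\<forall>i. \<exists>j. infinite {s. D i j s}"
  shows "GG D \<notin> Spl"
proof
  assume "GG D \<in> Spl"
  then obtain \<A> where fin: "finite \<A>" and infA: "\<forall>A\<in>\<A>. infinite A" and cov: "GG D \<subseteq> (\<Union>A\<in>\<A>. S A)"
    unfolding Spl_def by blast
  obtain jf where jf: "\<And>i. infinite {s. D i (jf i) s}" using H by metis
  have step1: "\<exists>A\<in>\<A>. \<exists>b. \<forall>p\<in>A. (aa i (jf i) \<le> p \<and> fst (prod_decode p) \<noteq> i) = b" for i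
  proof -
    let ?col = "{s. D i (jf i) s}"
    have "?col \<subseteq> (\<Union>A\<in>\<A>. {s\<in>?col. sig i (jf i) s \<in> S A})"
    proof
      fix s assume s: "s \<in> ?col"
      then have "sig i (jf i) s \<in> GG D" unfolding GG_def by blast
      then show "s \<in> (\<Union>A\<in>\<A>. {s\<in>?col. sig i (jf i) s \<in> S A})" using cov s by blast
    qed
    then have "infinite (\<Union>A\<in>\<A>. {s\<in>?col. sig i (jf i) s \<in> S A})" using jf[of i] by (rule infinite_super)
    then obtain A where A: "A \<in> \<A>" and infK: "infinite {s\<in>?col. sig i (jf i) s \<in> S A}"
      using finite_UN[OF fin] by blast
    let ?K = "{s\<in>?col. sig i (jf i) s \<in> S A}"
    let ?phi = "\<lambda>p. aa i (jf i) \<le> p \<and> fst (prod_decode p) \<noteq> i"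
    have const: "?phi p = ?phi q" if "p \<in> A" "q \<in> A" for p q
    proof -
      obtain s where s: "s \<in> ?K" "p + q < s"
        using infK by (meson infinite_nat_iff_unbounded)
      have "sig i (jf i) s \<in> S A" using s by blast
      moreover have "p < length (sig i (jf i) s)" "q < length (sig i (jf i) s)" using s by auto
      ultimately have "sig i (jf i) s ! p = sig i (jf i) s ! q" using that unfolding S_def by blast
      then show ?thesis using nth_sig \<open>p < length (sig i (jf i) s)\<close> \<open>q < length (sig i (jf i) s)\<close> by metis
    qed
    obtain p0 where "p0 \<in> A" using infA A by (metis ex_in_conv finite.emptyI)
    then have "\<forall>p\<in>A. ?phi p = ?phi p0" using const by blast
    then show ?thesis using A by blast
  qed
  define P where "P i A b = (A \<in> \<A> \<and> (\<forall>p\<in>A. (aa i (jf i) \<le> p \<and> fst (prod_decode p) \<noteq> i) = b))" for i A b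
  define Af where "Af i = (SOME A. \<exists>b. P i A b)" for i
  define bf where "bf i = (SOME b. P i (Af i) b)" for i
  have Pi: "P i (Af i) (bf i)" for i
  proof -
    have "\<exists>A b. P i A b" using step1[of i] unfolding P_def by blast
    then have "\<exists>b. P i (Af i) b" unfolding Af_def by (rule someI_ex)
    then show ?thesis unfolding bf_def by (rule someI_ex)
  qed
  have Af: "\<And>i. Af i \<in> \<A>" using Pi unfolding P_def by blast
  have bf: "\<And>i. \<forall>p\<in>Af i. (aa i (jf i) \<le> p \<and> fst (prod_decode p) \<noteq> i) = bf i"
    using Pi unfolding P_def by blast
  define g where "g i = (Af i, bf i)" for i
  have "finite (g ` UNIV)"
  proof (rule finite_subset)
    show "g ` UNIV \<subseteq> \<A> \<times> UNIV" using Af unfolding g_def by auto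
    show "finite (\<A> \<times> (UNIV :: bool set))" using fin by simp
  qed
  then obtain i0 where "infinite {i \<in> UNIV. g i = g i0}"
    using pigeonhole_infinite[of "UNIV :: nat set" g] by auto
  then have infI: "infinite {i. Af i = Af i0 \<and> bf i = bf i0}" unfolding g_def by simp
  let ?A = "Af i0"
  have infAA: "infinite ?A" using infA Af by blast
  show False
  proof (cases "bf i0")
    case True
    obtain p where p: "p \<in> ?A" using infAA by (metis ex_in_conv finite.emptyI)
    obtain i where i: "i \<in> {i. Af i = Af i0 \<and> bf i = bf i0}" "p < i"
      using infI by (meson infinite_nat_iff_unbounded)
    then have "aa i (jf i) \<le> p" using bf[of i] p True by auto
    then show False using aa_ge(1)[of i "jf i"] i(2) by linarith
  next
    case False
    obtain i1 where i1: "i1 \<in> {i. Af i = Af i0 \<and> bf i = bf i0}"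
      using infI by (meson infinite_nat_iff_unbounded)
    obtain i2 where i2: "i2 \<in> {i. Af i = Af i0 \<and> bf i = bf i0}" "i1 < i2"
      using infI by (meson infinite_nat_iff_unbounded)
    obtain p where p: "p \<in> ?A" "aa i1 (jf i1) + aa i2 (jf i2) < p"
      using infAA by (meson infinite_nat_iff_unbounded)
    have "fst (prod_decode p) = i1" using bf[of i1] i1 p False by auto
    moreover have "fst (prod_decode p) = i2" using bf[of i2] i2 p False by auto
    ultimately show False using i2(2) by simp
  qed
qed

fun cseq :: "(nat \<Rightarrow> nat) \<Rightarrow> nat \<Rightarrow> nat" where
  "cseq M 0 = 0"
| "cseq M (Suc t) = Suc (max (cseq M t) (M (cseq M t)))"

lemma cseq_smono: "strict_mono (cseq M)"
  by (rule strict_monoI_Suc) simp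

lemma cseq_cross: assumes "0 < a" shows "\<exists>t. cseq M t < a \<and> a \<le> cseq M (Suc t)"
proof (rule ccontr)
  assume "\<not> ?thesis"
  then have h: "cseq M t < a \<Longrightarrow> cseq M (Suc t) < a" for t by (meson not_le)
  have "cseq M t < a" for t by (induction t) (use assms h in auto)
  moreover have "t \<le> cseq M t" for t using cseq_smono strict_mono_imp_increasing by blast
  ultimately show False by (metis leD)
qed

lemma S_false: "(\<forall>p\<in>A. p < length \<sigma> \<longrightarrow> \<sigma> ! p = False) \<Longrightarrow> \<sigma> \<in> S A"
  unfolding S_def by auto

lemma claim1b:
  assumes H: "\<forall>i\<ge>i0. \<forall>j. finite {s. D i j s}"
  shows "GG D \<in> Spl"
proof -
  define Z where "Z i = {p. fst (prod_decode p) = i}" for i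
  define N where "N i j = (if i0 \<le> i then aa i j + Suc (Max (insert 0 {s. D i j s})) else 0)" for i j
  define M where "M b = Max ((\<lambda>(i,j). N i j) ` ({..b} \<times> {..b}))" for b
  define c where "c = cseq M"
  define B where "B e = range (\<lambda>u. c (2*u + e))" for e
  define \<A> where "\<A> = Z ` {..<i0} \<union> {B 0, B 1}"
  have f1: "finite \<A>" unfolding \<A>_def by simp
  have f2: "\<forall>A\<in>\<A>. infinite A"
  proof
    fix A assume "A \<in> \<A>"
    then consider i where "A = Z i" | e where "A = B e" unfolding \<A>_def by blast
    then show "infinite A"
    proof cases
      case (1 i)
      have "inj (\<lambda>m. prod_encode (i,m))" by (simp add: inj_def prod_encode_eq)
      then have "infinite (range (\<lambda>m. prod_encode (i,m)))" by (rule range_inj_infinite)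
      moreover have "range (\<lambda>m. prod_encode (i,m)) \<subseteq> A" unfolding 1 Z_def by auto
      ultimately show ?thesis using finite_subset by blast
    next
      case (2 e)
      have i1: "inj c" unfolding c_def using cseq_smono strict_mono_imp_inj_on by blast
      have i2: "inj (\<lambda>u::nat. 2*u + e)" by (simp add: inj_def)
      have "inj (\<lambda>u. c (2*u + e))" using inj_compose[OF i1 i2] by (simp add: comp_def)
      then show ?thesis unfolding 2 B_def by (rule range_inj_infinite)
    qed
  qed
  have f3: "GG D \<subseteq> (\<Union>A\<in>\<A>. S A)"
  proof
    fix \<sigma> assume "\<sigma> \<in> GG D"
    then obtain i j s where \<sigma>: "\<sigma> = sig i j s" and D: "D i j s" unfolding GG_def by blast
    show "\<sigma> \<in> (\<Union>A\<in>\<A>. S A)"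
    proof (cases "i < i0")
      case True
      have "\<sigma> \<in> S (Z i)"
        by (rule S_false) (auto simp: \<sigma> nth_sig Z_def)
      moreover have "Z i \<in> \<A>" using True unfolding \<A>_def by blast
      ultimately show ?thesis by blast
    next
      case False
      let ?a = "aa i j"
      obtain t where t: "c t < ?a" "?a \<le> c (Suc t)"
        using cseq_cross[of ?a M] unfolding c_def aa_def by auto
      have fincol: "finite {s. D i j s}" using H False by simp
      have lenN: "length \<sigma> \<le> N i j"
      proof -
        have "s \<le> Max (insert 0 {s. D i j s})" using fincol D by simp
        then show ?thesis using False unfolding N_def \<sigma> by simp
      qed
      have ij: "i \<le> c (Suc t)" "j \<le> c (Suc t)" using aa_ge(1)[of i j] aa_ge(2)[of j i] t(2) by linarith+
      have NM: "N i j \<le> M (c (Suc t))"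
        unfolding M_def by (rule Max_ge) (use ij in auto)
      have NM2: "N i j < c (Suc (Suc t))" using NM unfolding c_def by simp
      have "\<sigma> \<in> S (B (t mod 2))"
      proof (rule S_false, intro ballI impI)
        fix p assume p: "p \<in> B (t mod 2)" "p < length \<sigma>"
        then obtain u where u: "p = c (2*u + t mod 2)" unfolding B_def by blast
        show "\<sigma> ! p = False"
        proof (cases "2*u + t mod 2 \<le> t")
          case True
          then have "p \<le> c t" unfolding u c_def by (rule strict_mono_leD[OF cseq_smono])
          then show ?thesis using t(1) p(2) by (simp add: \<sigma> nth_sig)
        next
          case False
          then have le2: "Suc (Suc t) \<le> 2*u + t mod 2" by presburger
          have "c (Suc (Suc t)) \<le> p" unfolding u c_def by (rule strict_mono_leD[OF cseq_smono le2])
          then show ?thesis using NM2 lenN p(2) by linarith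
        qed
      qed
      moreover have "B (t mod 2) \<in> \<A>"
      proof -
        have "B (t mod 2) \<in> {B 0, B 1}"
        proof (cases "t mod 2 = 0")
          case True then show ?thesis by simp
        next
          case False then have "t mod 2 = 1" by presburger
          then show ?thesis by simp
        qed
        then show ?thesis unfolding \<A>_def by (rule UnI2)
      qed
      ultimately show ?thesis by blast
    qed
  qed
  show ?thesis unfolding Spl_def by (intro CollectI exI[of _ \<A>] conjI f1 f2 f3)
qed

definition dep :: "nat \<Rightarrow> ((nat \<Rightarrow> bool) \<Rightarrow> bool) \<Rightarrow> bool" where
  "dep N P = (\<forall>x x'. (\<forall>m<N. x m = x' m) \<longrightarrow> P x = P x')"

definition fin :: "((nat \<Rightarrow> bool) \<Rightarrow> bool) \<Rightarrow> bool" where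
  "fin P = (\<exists>N. dep N P)"

lemma dep_mono: assumes "dep N P" "N \<le> N'" shows "dep N' P"
  unfolding dep_def
proof (intro allI impI)
  fix x x' :: "nat \<Rightarrow> bool"
  assume "\<forall>m<N'. x m = x' m"
  then have "\<forall>m<N. x m = x' m" using assms(2) by simp
  then show "P x = P x'" using assms(1) unfolding dep_def by blast
qed

lemma fin_const: "fin (\<lambda>x. b)"
  unfolding fin_def dep_def by blast

lemma fin_var_eq: "fin (\<lambda>x. x c = b)"
  unfolding fin_def dep_def by (rule exI[of _ "Suc c"]) auto

lemma fin_var: "fin (\<lambda>x. x c)"
  unfolding fin_def dep_def by (rule exI[of _ "Suc c"]) auto

lemma fin_conj: "fin P \<Longrightarrow> fin Q \<Longrightarrow> fin (\<lambda>x. P x \<and> Q x)"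
proof -
  assume "fin P" "fin Q"
  then obtain N1 N2 where "dep N1 P" "dep N2 Q" unfolding fin_def by blast
  then have "dep (max N1 N2) P" "dep (max N1 N2) Q" using dep_mono by (meson max.cobounded1 max.cobounded2)+
  then show ?thesis unfolding fin_def dep_def by blast
qed

lemma fin_not: "fin P \<Longrightarrow> fin (\<lambda>x. \<not> P x)"
  unfolding fin_def dep_def by blast

lemma fin_cong: "fin P \<Longrightarrow> (\<And>x. P x = Q x) \<Longrightarrow> fin Q"
  unfolding fin_def dep_def by simp

lemma fin_ball: assumes "finite K" "\<And>k. k \<in> K \<Longrightarrow> fin (P k)" shows "fin (\<lambda>x. \<forall>k\<in>K. P k x)"
  using assms
proof (induction K rule: finite_induct)
  case empty
  then show ?case by (simp add: fin_const)
next
  case (insert a K)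
  have "fin (\<lambda>x. P a x \<and> (\<forall>k\<in>K. P k x))"
    using insert by (intro fin_conj) auto
  then show ?case by (rule fin_cong) simp
qed

lemma fin_bex: assumes "finite K" "\<And>k. k \<in> K \<Longrightarrow> fin (P k)" shows "fin (\<lambda>x. \<exists>k\<in>K. P k x)"
proof -
  have "fin (\<lambda>x. \<not> (\<forall>k\<in>K. \<not> P k x))"
    using assms by (intro fin_not fin_ball) (auto intro: fin_not)
  then show ?thesis by (rule fin_cong) simp
qed

lemma fin_common: assumes "finite F" "\<forall>\<sigma>\<in>F. fin (P \<sigma>)" shows "\<exists>N. \<forall>\<sigma>\<in>F. dep N (P \<sigma>)"
  using assms
proof (induction F rule: finite_induct)
  case empty
  then show ?case by blast
next
  case (insert a F)
  then obtain N1 where N1: "\<forall>\<sigma>\<in>F. dep N1 (P \<sigma>)" by blast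
  obtain N2 where N2: "dep N2 (P a)" using insert unfolding fin_def by blast
  have "\<forall>\<sigma>\<in>insert a F. dep (max N1 N2) (P \<sigma>)"
    using N1 N2 dep_mono by (metis insert_iff max.cobounded1 max.cobounded2)
  then show ?case by blast
qed

definition incyl :: "(nat \<Rightarrow> bool) \<Rightarrow> bool list \<Rightarrow> bool" where
  "incyl x l = (\<forall>m<length l. x m = l ! m)"

definition lst :: "nat \<Rightarrow> bool list" where "lst n = from_nat n"

definition psi :: "(nat \<Rightarrow> bool) \<Rightarrow> nat \<Rightarrow> nat \<Rightarrow> nat \<Rightarrow> nat \<Rightarrow> bool" where
  "psi x i j k n = (x (to_nat (i,j,k,n)) \<and> incyl x (lst n))"

definition HH :: "(nat \<Rightarrow> bool) \<Rightarrow> bool list \<Rightarrow> bool" where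
  "HH x = char_fun (GG (\<lambda>i j s. Dg (psi x i j) s))"

lemma fin_incyl: "fin (\<lambda>x. incyl x l)"
proof -
  have "fin (\<lambda>x. \<forall>m\<in>{..<length l}. x m = l ! m)"
    by (rule fin_ball) (auto intro: fin_var_eq)
  then show ?thesis by (rule fin_cong) (auto simp: incyl_def)
qed

lemma fin_psi: "fin (\<lambda>x. psi x i j k n)"
  unfolding psi_def by (intro fin_conj fin_var fin_incyl)

lemma fin_Wg: "fin (\<lambda>x. Wg (psi x i j) m t)"
proof -
  have "fin (\<lambda>x. \<forall>k\<in>{..m}. \<exists>n\<in>{..t}. psi x i j k n)"
    by (intro fin_ball fin_bex fin_psi) auto
  then show ?thesis by (rule fin_cong) (auto simp: Wg_def)
qed

lemma fin_Dg: "fin (\<lambda>x. Dg (psi x i j) s)"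
proof -
  obtain m t where mt: "prod_decode s = (m,t)" by (cases "prod_decode s") auto
  have "fin (\<lambda>x. Wg (psi x i j) m t \<and> (\<forall>t'\<in>{..<t}. \<not> Wg (psi x i j) m t'))"
    by (intro fin_conj fin_ball fin_not fin_Wg) auto
  then show ?thesis by (rule fin_cong) (auto simp: Dg_def mt)
qed

lemma fin_GG: "fin (\<lambda>x. \<sigma> \<in> GG (\<lambda>i j s. Dg (psi x i j) s))"
proof -
  let ?L = "length \<sigma>"
  have "fin (\<lambda>x. \<exists>i\<in>{..?L}. \<exists>j\<in>{..?L}. \<exists>s\<in>{..?L}. \<sigma> = sig i j s \<and> Dg (psi x i j) s)"
    by (intro fin_bex fin_conj fin_const fin_Dg) auto
  moreover have "(\<exists>i\<in>{..?L}. \<exists>j\<in>{..?L}. \<exists>s\<in>{..?L}. \<sigma> = sig i j s \<and> Dg (psi x i j) s)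
      = (\<sigma> \<in> GG (\<lambda>i j s. Dg (psi x i j) s))" for x
  proof
    assume "\<sigma> \<in> GG (\<lambda>i j s. Dg (psi x i j) s)"
    then obtain i j s where h: "\<sigma> = sig i j s" "Dg (psi x i j) s" unfolding GG_def by blast
    have "i \<le> ?L" "j \<le> ?L" "s \<le> ?L" using h(1) aa_ge(1)[of i j] aa_ge(2)[of j i] by auto
    then show "\<exists>i\<in>{..?L}. \<exists>j\<in>{..?L}. \<exists>s\<in>{..?L}. \<sigma> = sig i j s \<and> Dg (psi x i j) s"
      using h by blast
  qed (auto simp: GG_def)
  ultimately show ?thesis by (rule fin_cong)
qed

lemma HH_cont:
  assumes op: "openin cantor_top U" and x: "HH x \<in> U"
  shows "\<exists>n. incyl x (lst n) \<and> (\<forall>x'. incyl x' (lst n) \<longrightarrow> HH x' \<in> U)"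
proof -
  obtain V where V: "finite {i. V i \<noteq> UNIV}" "HH x \<in> Pi\<^sub>E UNIV V" "Pi\<^sub>E UNIV V \<subseteq> U"
    using op x unfolding cantor_top_def openin_product_topology_alt by auto
  let ?F = "{i. V i \<noteq> UNIV}"
  obtain N where N: "\<forall>\<sigma>\<in>?F. dep N (\<lambda>x. \<sigma> \<in> GG (\<lambda>i j s. Dg (psi x i j) s))"
    using fin_common[OF V(1), of "\<lambda>\<sigma> x. \<sigma> \<in> GG (\<lambda>i j s. Dg (psi x i j) s)"] fin_GG by blast
  define l where "l = map x [0..<N]"
  have ln: "lst (to_nat l) = l" unfolding lst_def by simp
  have "incyl x l" unfolding incyl_def l_def by simp
  moreover have "HH x' \<in> U" if "incyl x' l" for x'
  proof -
    have agree: "\<forall>m<N. x m = x' m" using that unfolding incyl_def l_def by simp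
    have "HH x' \<in> Pi\<^sub>E UNIV V"
    proof (unfold PiE_UNIV_domain, rule Pi_I)
      fix \<sigma> :: "bool list"
      show "HH x' \<sigma> \<in> V \<sigma>"
      proof (cases "\<sigma> \<in> ?F")
        case True
        then have "HH x' \<sigma> = HH x \<sigma>" using N agree unfolding dep_def HH_def char_fun_def by metis
        moreover have "HH x \<sigma> \<in> V \<sigma>" using V(2) by (auto simp: PiE_UNIV_domain)
        ultimately show ?thesis by simp
      next
        case False
        then show ?thesis by simp
      qed
    qed
    then show ?thesis using V(3) by blast
  qed
  ultimately show ?thesis using ln by metis
qed

lemma Sigma0_SS: fixes X :: "('a \<Rightarrow> bool) set" shows "X \<in> Sigma0 (Suc (Suc n)) \<longleftrightarrow> (\<exists>f :: nat \<Rightarrow> ('a \<Rightarrow> bool) set. X = \<Union>(range f) \<and> (\<forall>i. - f i \<in> Sigma0 (Suc n)))"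
proof -
  have "f i \<in> uminus ` Sigma0 (Suc n) \<longleftrightarrow> - f i \<in> Sigma0 (Suc n)" for f :: "nat \<Rightarrow> ('a \<Rightarrow> bool) set" and i
  proof
    assume "f i \<in> uminus ` Sigma0 (Suc n)"
    then obtain a where "a \<in> Sigma0 (Suc n)" "f i = - a" by blast
    then show "- f i \<in> Sigma0 (Suc n)" by simp
  next
    assume "- f i \<in> Sigma0 (Suc n)"
    then have "- (- f i) \<in> uminus ` Sigma0 (Suc n)" by (rule imageI)
    then show "f i \<in> uminus ` Sigma0 (Suc n)" by simp
  qed
  note hh = this
  have eq: "X \<in> Sigma0 (Suc (Suc n)) \<longleftrightarrow> (\<exists>f :: nat \<Rightarrow> ('a \<Rightarrow> bool) set. X = \<Union>(range f) \<and> (\<forall>i. f i \<in> uminus ` Sigma0 (Suc n)))"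
    by (simp only: Sigma0.simps mem_Collect_eq)
  show ?thesis
  proof
    assume "X \<in> Sigma0 (Suc (Suc n))"
    then obtain f :: "nat \<Rightarrow> ('a \<Rightarrow> bool) set" where f: "X = \<Union>(range f)" "\<forall>i. f i \<in> uminus ` Sigma0 (Suc n)"
      unfolding eq by (elim exE conjE)
    have "\<forall>i. - f i \<in> Sigma0 (Suc n)"
    proof
      fix i show "- f i \<in> Sigma0 (Suc n)" using f(2) hh[of f i] by (simp only: )
    qed
    then show "\<exists>f :: nat \<Rightarrow> ('a \<Rightarrow> bool) set. X = \<Union>(range f) \<and> (\<forall>i. - f i \<in> Sigma0 (Suc n))"
      using f(1) by (intro exI[of _ f] conjI)
  next
    assume "\<exists>f :: nat \<Rightarrow> ('a \<Rightarrow> bool) set. X = \<Union>(range f) \<and> (\<forall>i. - f i \<in> Sigma0 (Suc n))"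
    then obtain f :: "nat \<Rightarrow> ('a \<Rightarrow> bool) set" where f: "X = \<Union>(range f)" "\<forall>i. - f i \<in> Sigma0 (Suc n)"
      by (elim exE conjE)
    have "\<forall>i. f i \<in> uminus ` Sigma0 (Suc n)"
    proof
      fix i show "f i \<in> uminus ` Sigma0 (Suc n)" using f(2) hh[of f i] by (simp only: )
    qed
    then show "X \<in> Sigma0 (Suc (Suc n))" unfolding eq using f(1) by (intro exI[of _ f] conjI)
  qed
qed

lemma choice_nat: "\<forall>i::nat. \<exists>g. Q i g \<Longrightarrow> \<exists>G. \<forall>i. Q i (G i)"
  by (rule choice)

lemma Pi4:
  assumes "Y \<in> (Pi0 4 :: ('a \<Rightarrow> bool) set set)"
  shows "\<exists>w :: nat \<Rightarrow> nat \<Rightarrow> nat \<Rightarrow> ('a \<Rightarrow> bool) set. (\<forall>i j k. openin cantor_top (w i j k)) \<and> Y = {\<Phi>. \<forall>i. \<exists>j. \<forall>k. \<Phi> \<in> w i j k}"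
proof -
  have four: "(4::nat) = Suc (Suc (Suc (Suc 0)))" by simp
  have "Y \<in> uminus ` Sigma0 (Suc (Suc (Suc (Suc 0))))" using assms unfolding Pi0_def by (simp only: four)
  then obtain X where X: "X \<in> Sigma0 (Suc (Suc (Suc (Suc 0))))" "Y = - X"
    by (elim imageE)
  obtain f :: "nat \<Rightarrow> ('a \<Rightarrow> bool) set" where f: "X = \<Union>(range f)" "\<forall>i. - f i \<in> Sigma0 (Suc (Suc (Suc 0)))"
    using Sigma0_SS[THEN iffD1, OF X(1)] by (elim exE conjE) blast
  have "\<forall>i. \<exists>g :: nat \<Rightarrow> ('a \<Rightarrow> bool) set. - f i = \<Union>(range g) \<and> (\<forall>j. - g j \<in> Sigma0 (Suc (Suc 0)))"
  proof
    fix i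
    from f(2) have "- f i \<in> Sigma0 (Suc (Suc (Suc 0)))" by (rule spec)
    then show "\<exists>g :: nat \<Rightarrow> ('a \<Rightarrow> bool) set. - f i = \<Union>(range g) \<and> (\<forall>j. - g j \<in> Sigma0 (Suc (Suc 0)))"
      by (rule Sigma0_SS[THEN iffD1])
  qed
  then have "\<exists>g :: nat \<Rightarrow> nat \<Rightarrow> ('a \<Rightarrow> bool) set. \<forall>i. - f i = \<Union>(range (g i)) \<and> (\<forall>j. - g i j \<in> Sigma0 (Suc (Suc 0)))"
    by (rule choice_nat)
  then obtain g :: "nat \<Rightarrow> nat \<Rightarrow> ('a \<Rightarrow> bool) set" where g: "\<forall>i. - f i = \<Union>(range (g i)) \<and> (\<forall>j. - g i j \<in> Sigma0 (Suc (Suc 0)))"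
    by blast
  have "\<forall>i. \<exists>h :: nat \<Rightarrow> nat \<Rightarrow> ('a \<Rightarrow> bool) set. \<forall>j. - g i j = \<Union>(range (h j)) \<and> (\<forall>k. - h j k \<in> Sigma0 (Suc 0))"
  proof
    fix i
    have "\<forall>j. \<exists>h :: nat \<Rightarrow> ('a \<Rightarrow> bool) set. - g i j = \<Union>(range h) \<and> (\<forall>k. - h k \<in> Sigma0 (Suc 0))"
    proof
      fix j
      have "- g i j \<in> Sigma0 (Suc (Suc 0))" using g by blast
      then show "\<exists>h :: nat \<Rightarrow> ('a \<Rightarrow> bool) set. - g i j = \<Union>(range h) \<and> (\<forall>k. - h k \<in> Sigma0 (Suc 0))"
        by (rule Sigma0_SS[THEN iffD1])
    qed
    then show "\<exists>h :: nat \<Rightarrow> nat \<Rightarrow> ('a \<Rightarrow> bool) set. \<forall>j. - g i j = \<Union>(range (h j)) \<and> (\<forall>k. - h j k \<in> Sigma0 (Suc 0))"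
      by (rule choice_nat)
  qed
  then have "\<exists>h :: nat \<Rightarrow> nat \<Rightarrow> nat \<Rightarrow> ('a \<Rightarrow> bool) set. \<forall>i. \<forall>j. - g i j = \<Union>(range (h i j)) \<and> (\<forall>k. - h i j k \<in> Sigma0 (Suc 0))"
    by (rule choice_nat)
  then obtain h :: "nat \<Rightarrow> nat \<Rightarrow> nat \<Rightarrow> ('a \<Rightarrow> bool) set" where h: "\<forall>i j. - g i j = \<Union>(range (h i j)) \<and> (\<forall>k. - h i j k \<in> Sigma0 (Suc 0))"
    by blast
  have gE: "- f i = \<Union>(range (g i))" for i using g by blast
  have hE: "- g i j = \<Union>(range (h i j))" for i j using h by blast
  define w where "w i j k = - h i j k" for i j k
  have "\<forall>i j k. openin cantor_top (w i j k)" using h unfolding w_def by simp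
  moreover have "Y = {\<Phi>. \<forall>i. \<exists>j. \<forall>k. \<Phi> \<in> w i j k}"
  proof -
    have "\<Phi> \<in> Y \<longleftrightarrow> (\<forall>i. \<exists>j. \<forall>k. \<Phi> \<in> w i j k)" for \<Phi>
    proof -
      have "\<Phi> \<in> Y \<longleftrightarrow> (\<forall>i. \<Phi> \<in> - f i)" using X(2) f(1) by auto
      also have "\<dots> \<longleftrightarrow> (\<forall>i. \<exists>j. \<Phi> \<in> g i j)" by (simp add: gE)
      also have "\<dots> \<longleftrightarrow> (\<forall>i. \<exists>j. \<Phi> \<notin> - g i j)" by simp
      also have "\<dots> \<longleftrightarrow> (\<forall>i. \<exists>j. \<forall>k. \<Phi> \<in> w i j k)" by (simp add: hE w_def)
      finally show ?thesis .
    qed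
    then show ?thesis by blast
  qed
  ultimately show ?thesis by blast
qed

lemma char_fun_inj: "char_fun X = char_fun Y \<Longrightarrow> X = Y"
  unfolding char_fun_def by (simp add: fun_eq_iff set_eq_iff)

theorem mainTheorem10:
  shows "char_fun ` Spl \<notin> (Pi0 4 :: (bool list \<Rightarrow> bool) set set)"
proof
  assume "char_fun ` Spl \<in> (Pi0 4 :: (bool list \<Rightarrow> bool) set set)"
  then obtain w :: "nat \<Rightarrow> nat \<Rightarrow> nat \<Rightarrow> (bool list \<Rightarrow> bool) set" where wo: "\<forall>i j k. openin cantor_top (w i j k)"
    and wY: "char_fun ` Spl = {\<Phi>. \<forall>i. \<exists>j. \<forall>k. \<Phi> \<in> w i j k}"
    using Pi4 by blast
  define O2 where "O2 i j k = (let J = (from_nat j :: nat list) in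
      if i < length J then (case prod_decode k of (i',k') \<Rightarrow> if i' \<le> i then w i' (J!i') k' else UNIV) else {})"
    for i j k
  have contP: "\<exists>n. incyl x (lst n) \<and> (\<forall>x'. incyl x' (lst n) \<longrightarrow> HH x' \<in> O2 i j k)"
    if "HH x \<in> O2 i j k" for x i j k
  proof -
    let ?J = "from_nat j :: nat list"
    obtain i' k' where ik: "prod_decode k = (i',k')" by (cases "prod_decode k") auto
    show ?thesis
    proof (cases "i < length ?J \<and> i' \<le> i")
      case True
      then have "O2 i j k = w i' (?J!i') k'" unfolding O2_def Let_def ik by simp
      then have "openin cantor_top (O2 i j k)" using wo by simp
      then show ?thesis using HH_cont[OF _ that] by blast
    next
      case False
      show ?thesis
      proof (cases "i < length ?J")
        case True
        then have "O2 i j k = UNIV" using False unfolding O2_def Let_def ik by simp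
        moreover have "lst (to_nat ([]::bool list)) = []" unfolding lst_def by simp
        moreover have "incyl x []" unfolding incyl_def by simp
        ultimately show ?thesis by (intro exI[of _ "to_nat ([]::bool list)"]) simp
      next
        case False
        then have "O2 i j k = {}" unfolding O2_def Let_def by simp
        then show ?thesis using that by simp
      qed
    qed
  qed
  define y0 where "y0 c = (case (from_nat c :: nat \<times> nat \<times> nat \<times> nat) of (i,j,k,n) \<Rightarrow>
      \<forall>x'. incyl x' (lst n) \<longrightarrow> HH x' \<in> O2 i j k)" for c
  have key: "(\<exists>n. psi y0 i j k n) \<longleftrightarrow> HH y0 \<in> O2 i j k" for i j k
  proof
    assume "\<exists>n. psi y0 i j k n"
    then obtain n where "psi y0 i j k n" by blast
    then have "\<forall>x'. incyl x' (lst n) \<longrightarrow> HH x' \<in> O2 i j k" "incyl y0 (lst n)"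
      unfolding psi_def y0_def by auto
    then show "HH y0 \<in> O2 i j k" by blast
  next
    assume "HH y0 \<in> O2 i j k"
    then obtain n where n: "incyl y0 (lst n)" "\<forall>x'. incyl x' (lst n) \<longrightarrow> HH x' \<in> O2 i j k"
      using contP by blast
    then have "psi y0 i j k n" unfolding psi_def y0_def by simp
    then show "\<exists>n. psi y0 i j k n" by blast
  qed
  define Q where "Q i j = (\<forall>k. HH y0 \<in> O2 i j k)" for i j
  have Q_iff: "Q i j \<longleftrightarrow> i < length (from_nat j :: nat list) \<and>
      (\<forall>i'\<le>i. \<forall>k'. HH y0 \<in> w i' ((from_nat j :: nat list)!i') k')" for i j
  proof
    assume q: "Q i j"
    have "i < length (from_nat j :: nat list)"
    proof (rule ccontr)
      assume "\<not> ?thesis"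
      then have "O2 i j 0 = {}" unfolding O2_def Let_def by simp
      then show False using q unfolding Q_def by blast
    qed
    moreover have "HH y0 \<in> w i' ((from_nat j :: nat list)!i') k'" if "i' \<le> i" for i' k'
    proof -
      have "HH y0 \<in> O2 i j (prod_encode (i',k'))" using q unfolding Q_def by blast
      then show ?thesis using that \<open>i < length (from_nat j :: nat list)\<close> unfolding O2_def Let_def by simp
    qed
    ultimately show "i < length (from_nat j :: nat list) \<and>
      (\<forall>i'\<le>i. \<forall>k'. HH y0 \<in> w i' ((from_nat j :: nat list)!i') k')" by blast
  next
    assume a: "i < length (from_nat j :: nat list) \<and>
      (\<forall>i'\<le>i. \<forall>k'. HH y0 \<in> w i' ((from_nat j :: nat list)!i') k')"
    show "Q i j" unfolding Q_def
    proof
      fix k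
      obtain i' k' where ik: "prod_decode k = (i',k')" by (cases "prod_decode k") auto
      show "HH y0 \<in> O2 i j k" using a unfolding O2_def Let_def ik by simp
    qed
  qed
  have Q_mono: "Q i' j" if "Q i j" "i' \<le> i" for i i' j
  proof -
    have a: "i < length (from_nat j :: nat list)" "\<forall>i''\<le>i. \<forall>k'. HH y0 \<in> w i'' ((from_nat j :: nat list)!i'') k'"
      using that(1) unfolding Q_iff by blast+
    have "i' < length (from_nat j :: nat list)" using a(1) that(2) by linarith
    moreover have "\<forall>i''\<le>i'. \<forall>k'. HH y0 \<in> w i'' ((from_nat j :: nat list)!i'') k'"
    proof (intro allI impI)
      fix i'' k' assume "i'' \<le> i'"
      then have "i'' \<le> i" using that(2) by linarith
      then show "HH y0 \<in> w i'' ((from_nat j :: nat list)!i'') k'" using a(2) by blast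
    qed
    ultimately show ?thesis unfolding Q_iff by blast
  qed
  have allQ: "(\<forall>i. \<exists>j. Q i j) \<longleftrightarrow> (\<forall>i. \<exists>j. \<forall>k. HH y0 \<in> w i j k)"
  proof
    assume a: "\<forall>i. \<exists>j. Q i j"
    show "\<forall>i. \<exists>j. \<forall>k. HH y0 \<in> w i j k"
    proof
      fix i
      obtain j where "Q i j" using a by blast
      then show "\<exists>j. \<forall>k. HH y0 \<in> w i j k" using Q_iff by blast
    qed
  next
    assume a: "\<forall>i. \<exists>j. \<forall>k. HH y0 \<in> w i j k"
    then obtain jf where jf: "\<forall>i. \<forall>k. HH y0 \<in> w i (jf i) k"
      using choice_nat[of "\<lambda>i j. \<forall>k. HH y0 \<in> w i j k"] by blast
    show "\<forall>i. \<exists>j. Q i j"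
    proof
      fix i
      define J where "J = map jf [0..<Suc i]"
      have "from_nat (to_nat J) = J" by simp
      have "Q i (to_nat J)" unfolding Q_iff using jf by (simp add: J_def nth_map_upt del: upt_Suc)
      then show "\<exists>j. Q i j" by blast
    qed
  qed
  define D0 where "D0 = (\<lambda>i j s. Dg (psi y0 i j) s)"
  have colQ: "infinite {s. D0 i j s} \<longleftrightarrow> Q i j" for i j
    unfolding D0_def claim2 Q_def using key by blast
  have HHspl: "HH y0 \<in> char_fun ` Spl \<longleftrightarrow> GG D0 \<in> Spl"
  proof -
    have "HH y0 = char_fun (GG D0)" unfolding HH_def D0_def by simp
    moreover have "inj (char_fun :: bool list set \<Rightarrow> bool list \<Rightarrow> bool)" using char_fun_inj by (rule injI)
    ultimately show ?thesis by (simp add: inj_image_mem_iff)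
  qed
  have "HH y0 \<in> char_fun ` Spl \<longleftrightarrow> (\<forall>i. \<exists>j. \<forall>k. HH y0 \<in> w i j k)"
    by (simp only: wY mem_Collect_eq)
  then have spl_iff: "GG D0 \<in> Spl \<longleftrightarrow> (\<forall>i. \<exists>j. Q i j)"
    using HHspl allQ by blast
  show False
  proof (cases "\<forall>i. \<exists>j. Q i j")
    case True
    then have "\<forall>i. \<exists>j. infinite {s. D0 i j s}" using colQ by blast
    then have "GG D0 \<notin> Spl" by (rule claim1a)
    then show False using True spl_iff by blast
  next
    case False
    then obtain i0 where i0: "\<forall>j. \<not> Q i0 j" by blast
    then have "\<forall>i\<ge>i0. \<forall>j. finite {s. D0 i j s}" using colQ Q_mono by blast
    then have "GG D0 \<in> Spl" by (rule claim1b)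
    then show False using False spl_iff by blast
  qed
qed

end
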